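(* Let $G$ be a topological group acting continuously on a topological space $X$, let $\Delta$ be the partition of $X$ into $G$-orbits, $Y=X/G$ with the quotient topology, and $p:X\to Y$ the projection. Suppose that (a) $X$ is a Hausdorff Baire space; (b) $G=\bigcup_{i=1}^\infty G_i$ is a union of countably many compact sets $G_i$; (c) the action has at least two distinct orbits; (d) each orbit is dense in $X$. Then $p$ has property (CONT) but does not have property (COMP).
   Context: A Baire space is a topological space that is not a countable union of nowhere dense subsets of itself. A $\Delta$-map is a continuous $h:X\to X$ mapping each element of $\Delta$ into some element of $\Delta$; $\mathrm{End}(X,\Delta)$ is the monoid of $\Delta$-maps, $\mathrm{End}(Y)=C(Y,Y)$, and $\psi(h)$ is the unique map with $p\circ h=\psi(h)\circ p$. Property (COMP): for every compact $L\subset Y$ there is a compact $K\subset X$ with $p(K)=L$. Property (CONT): $\psi:\mathrm{End}(X,\Delta)\to\mathrm{End}(Y)$ is continuous with respect to compact open topologies. *)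

theory Defs
  imports "HOL-Analysis.Analysis"
begin

definition topological_group ::
  "'g topology \<Rightarrow> ('g \<Rightarrow> 'g \<Rightarrow> 'g) \<Rightarrow> ('g \<Rightarrow> 'g) \<Rightarrow> 'g \<Rightarrow> bool" where
  "topological_group TG gmul ginv e \<longleftrightarrow>
     e \<in> topspace TG \<and>
     (\<forall>a\<in>topspace TG. \<forall>b\<in>topspace TG. gmul a b \<in> topspace TG) \<and>
     (\<forall>a\<in>topspace TG. ginv a \<in> topspace TG) \<and>
     (\<forall>a\<in>topspace TG. \<forall>b\<in>topspace TG. \<forall>c\<in>topspace TG.
         gmul (gmul a b) c = gmul a (gmul b c)) \<and>
     (\<forall>a\<in>topspace TG. gmul e a = a \<and> gmul a e = a) \<and>
     (\<forall>a\<in>topspace TG. gmul (ginv a) a = e \<and> gmul a (ginv a) = e) \<and>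
     continuous_map (prod_topology TG TG) TG (\<lambda>(a, b). gmul a b) \<and>
     continuous_map TG TG ginv"

definition continuous_action ::
  "'g topology \<Rightarrow> ('g \<Rightarrow> 'g \<Rightarrow> 'g) \<Rightarrow> 'g \<Rightarrow> 'x topology \<Rightarrow> ('g \<Rightarrow> 'x \<Rightarrow> 'x) \<Rightarrow> bool" where
  "continuous_action TG gmul e X act \<longleftrightarrow>
     continuous_map (prod_topology TG X) X (\<lambda>(g, x). act g x) \<and>
     (\<forall>x\<in>topspace X. act e x = x) \<and>
     (\<forall>g\<in>topspace TG. \<forall>h\<in>topspace TG. \<forall>x\<in>topspace X.
         act (gmul g h) x = act g (act h x))"

definition orbit :: "'g topology \<Rightarrow> ('g \<Rightarrow> 'x \<Rightarrow> 'x) \<Rightarrow> 'x \<Rightarrow> 'x set" where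
  "orbit TG act x = {act g x | g. g \<in> topspace TG}"

text \<open>The partition \<Delta> of X into orbits (= the points of Y = X/G).\<close>
definition orbits :: "'g topology \<Rightarrow> 'x topology \<Rightarrow> ('g \<Rightarrow> 'x \<Rightarrow> 'x) \<Rightarrow> 'x set set" where
  "orbits TG X act = {orbit TG act x | x. x \<in> topspace X}"

definition quotient_topology :: "'x topology \<Rightarrow> ('x \<Rightarrow> 'y) \<Rightarrow> 'y set \<Rightarrow> 'y topology" where
  "quotient_topology X p Q =
     topology (\<lambda>U. U \<subseteq> Q \<and> openin X {x \<in> topspace X. p x \<in> U})"

definition nowhere_dense_in :: "'a topology \<Rightarrow> 'a set \<Rightarrow> bool" where
  "nowhere_dense_in X A \<longleftrightarrow> A \<subseteq> topspace X \<and> X interior_of (X closure_of A) = {}"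

definition Baire_space :: "'a topology \<Rightarrow> bool" where
  "Baire_space X \<longleftrightarrow>
     \<not> (\<exists>\<N>. countable \<N> \<and> (\<forall>N\<in>\<N>. nowhere_dense_in X N) \<and> \<Union>\<N> = topspace X)"

text \<open>Compact-open topology on a set S of maps from X to Y (maps are taken
  extensional, i.e. equal to undefined outside topspace X, so that they are
  determined by their values on X).\<close>
definition compact_open_topology ::
  "'a topology \<Rightarrow> 'b topology \<Rightarrow> ('a \<Rightarrow> 'b) set \<Rightarrow> ('a \<Rightarrow> 'b) topology" where
  "compact_open_topology X Y S =
     subtopology
       (topology_generated_by {{f. f ` K \<subseteq> U} | K U. compactin X K \<and> openin Y U}) S"

definition End_Delta :: "'x topology \<Rightarrow> 'x set set \<Rightarrow> ('x \<Rightarrow> 'x) set" where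
  "End_Delta X \<Delta> =
     {h. continuous_map X X h \<and> h \<in> extensional (topspace X) \<and>
         (\<forall>D\<in>\<Delta>. \<exists>E\<in>\<Delta>. h ` D \<subseteq> E)}"

definition End_space :: "'y topology \<Rightarrow> ('y \<Rightarrow> 'y) set" where
  "End_space Y = {f. continuous_map Y Y f \<and> f \<in> extensional (topspace Y)}"

text \<open>psi h is the (unique extensional) map with p o h = psi h o p.\<close>
definition psi_map ::
  "'x topology \<Rightarrow> ('x \<Rightarrow> 'y) \<Rightarrow> 'y set \<Rightarrow> ('x \<Rightarrow> 'x) \<Rightarrow> 'y \<Rightarrow> 'y" where
  "psi_map X p Q h =
     (\<lambda>y. if y \<in> Q then p (h (SOME x. x \<in> topspace X \<and> p x = y)) else undefined)"

definition prop_COMP :: "'x topology \<Rightarrow> 'y topology \<Rightarrow> ('x \<Rightarrow> 'y) \<Rightarrow> bool" where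
  "prop_COMP X Y p \<longleftrightarrow>
     (\<forall>L. compactin Y L \<longrightarrow> (\<exists>K. compactin X K \<and> p ` K = L))"

definition prop_CONT ::
  "'x topology \<Rightarrow> 'x set set \<Rightarrow> 'y topology \<Rightarrow> ('x \<Rightarrow> 'y) \<Rightarrow> bool" where
  "prop_CONT X \<Delta> Y p \<longleftrightarrow>
     continuous_map
       (compact_open_topology X X (End_Delta X \<Delta>))
       (compact_open_topology Y Y (End_space Y))
       (psi_map X p (topspace Y))"

end

theory Submission
  imports Defs
begin

theorem mainTheorem10:
  fixes TG :: "'g topology" and gmul :: "'g \<Rightarrow> 'g \<Rightarrow> 'g" and ginv :: "'g \<Rightarrow> 'g" and e :: 'g
    and X :: "'x topology" and act :: "'g \<Rightarrow> 'x \<Rightarrow> 'x"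
    and Gi :: "nat \<Rightarrow> 'g set"
  assumes grp: "topological_group TG gmul ginv e"
    and action: "continuous_action TG gmul e X act"
    and Hausdorff: "Hausdorff_space X"
    and Baire: "Baire_space X"
    and Gi_compact: "\<And>i. compactin TG (Gi i)"
    and G_union: "topspace TG = (\<Union>i. Gi i)"
    and two_orbits: "\<exists>x\<in>topspace X. \<exists>x'\<in>topspace X. orbit TG act x \<noteq> orbit TG act x'"
    and dense_orbits: "\<And>x. x \<in> topspace X \<Longrightarrow> X closure_of (orbit TG act x) = topspace X"
  shows "prop_CONT X (orbits TG X act)
           (quotient_topology X (orbit TG act) (orbits TG X act)) (orbit TG act)
       \<and> \<not> prop_COMP X (quotient_topology X (orbit TG act) (orbits TG X act)) (orbit TG act)"
proof -
  define G where "G = topspace TG"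
  define p where "p = orbit TG act"
  define Q where "Q = orbits TG X act"
  define Y where "Y = quotient_topology X p Q"
  have cont: "continuous_map (prod_topology TG X) X (\<lambda>(g, x). act g x)"
    and act_e: "\<And>x. x \<in> topspace X \<Longrightarrow> act e x = x"
    and act_mul: "\<And>g h x. g \<in> G \<Longrightarrow> h \<in> G \<Longrightarrow> x \<in> topspace X \<Longrightarrow> act (gmul g h) x = act g (act h x)"
    using action unfolding continuous_action_def G_def by auto
  have eG: "e \<in> G" and mulG: "\<And>a b. a \<in> G \<Longrightarrow> b \<in> G \<Longrightarrow> gmul a b \<in> G"
    and invG: "\<And>a. a \<in> G \<Longrightarrow> ginv a \<in> G"
    and invl: "\<And>a. a \<in> G \<Longrightarrow> gmul (ginv a) a = e"
    using grp unfolding topological_group_def G_def by auto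
  have actX: "\<And>g x. g \<in> G \<Longrightarrow> x \<in> topspace X \<Longrightarrow> act g x \<in> topspace X"
  proof -
    fix g x assume "g \<in> G" "x \<in> topspace X"
    then have "(g, x) \<in> topspace (prod_topology TG X)" by (simp add: G_def)
    then show "act g x \<in> topspace X"
      using continuous_map_image_subset_topspace[OF cont] by force
  qed
  have orb_sub: "\<And>x. x \<in> topspace X \<Longrightarrow> p x \<subseteq> topspace X"
    using actX unfolding p_def orbit_def G_def by auto
  have orb_self: "\<And>x. x \<in> topspace X \<Longrightarrow> x \<in> p x"
    unfolding p_def orbit_def using act_e eG unfolding G_def by force
  have orb_eq: "\<And>x y. x \<in> topspace X \<Longrightarrow> y \<in> p x \<Longrightarrow> p y = p x"
  proof -
    fix x y assume x: "x \<in> topspace X" and y: "y \<in> p x"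
    then obtain g where g: "g \<in> G" and yg: "y = act g x"
      unfolding p_def orbit_def G_def by auto
    have xy: "x = act (ginv g) y"
      using yg act_mul[OF invG[OF g] g x] invl[OF g] act_e[OF x] by simp
    have yX: "y \<in> topspace X" using actX g x yg by simp
    show "p y = p x"
    proof
      show "p y \<subseteq> p x"
      proof
        fix z assume "z \<in> p y"
        then obtain h where h: "h \<in> G" "z = act h y" unfolding p_def orbit_def G_def by auto
        then have "z = act (gmul h g) x" using act_mul[OF h(1) g x] yg by simp
        then show "z \<in> p x" using mulG[OF h(1) g] unfolding p_def orbit_def G_def by auto
      qed
      show "p x \<subseteq> p y"
      proof
        fix z assume "z \<in> p x"
        then obtain h where h: "h \<in> G" "z = act h x" unfolding p_def orbit_def G_def by auto
        then have "z = act (gmul h (ginv g)) y" using act_mul[OF h(1) invG[OF g] yX] xy by simp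
        then show "z \<in> p y" using mulG[OF h(1) invG[OF g]] unfolding p_def orbit_def G_def by auto
      qed
    qed
  qed
  have pQ: "\<And>x. x \<in> topspace X \<Longrightarrow> p x \<in> Q"
    unfolding p_def Q_def orbits_def by auto
  have Qp: "\<And>Aa. Aa \<in> Q \<Longrightarrow> \<exists>x\<in>topspace X. Aa = p x"
    unfolding p_def Q_def orbits_def by auto
  have isY: "istopology (\<lambda>U. U \<subseteq> Q \<and> openin X {x \<in> topspace X. p x \<in> U})"
  proof -
    have i1: "\<And>S T. S \<subseteq> Q \<and> openin X {x \<in> topspace X. p x \<in> S} \<Longrightarrow>
      T \<subseteq> Q \<and> openin X {x \<in> topspace X. p x \<in> T} \<Longrightarrow>
      S \<inter> T \<subseteq> Q \<and> openin X {x \<in> topspace X. p x \<in> S \<inter> T}"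
    proof -
      fix S T assume a: "S \<subseteq> Q \<and> openin X {x \<in> topspace X. p x \<in> S}"
        "T \<subseteq> Q \<and> openin X {x \<in> topspace X. p x \<in> T}"
      have "{x \<in> topspace X. p x \<in> S \<inter> T} = {x \<in> topspace X. p x \<in> S} \<inter> {x \<in> topspace X. p x \<in> T}"
        by auto
      then show "S \<inter> T \<subseteq> Q \<and> openin X {x \<in> topspace X. p x \<in> S \<inter> T}"
        using a by auto
    qed
    have i2: "\<And>K. \<forall>S\<in>K. S \<subseteq> Q \<and> openin X {x \<in> topspace X. p x \<in> S} \<Longrightarrow>
       \<Union>K \<subseteq> Q \<and> openin X {x \<in> topspace X. p x \<in> \<Union>K}"
    proof -
      fix K assume a: "\<forall>S\<in>K. S \<subseteq> Q \<and> openin X {x \<in> topspace X. p x \<in> S}"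
      have "{x \<in> topspace X. p x \<in> \<Union>K} = (\<Union>S\<in>K. {x \<in> topspace X. p x \<in> S})" by auto
      then show "\<Union>K \<subseteq> Q \<and> openin X {x \<in> topspace X. p x \<in> \<Union>K}"
        using a by auto
    qed
    show ?thesis unfolding istopology_def using i1 i2 by blast
  qed
  have openY: "\<And>U. openin Y U \<longleftrightarrow> U \<subseteq> Q \<and> openin X {x \<in> topspace X. p x \<in> U}"
    unfolding Y_def quotient_topology_def using topology_inverse'[OF isY] by simp
  have topY: "topspace Y = Q"
  proof
    show "topspace Y \<subseteq> Q" using openY openin_topspace by blast
    have "{x \<in> topspace X. p x \<in> Q} = topspace X" using pQ by auto
    then have "openin Y Q" using openY by simp
    then show "Q \<subseteq> topspace Y" using openin_subset by blast
  qed
  have indisc: "\<And>U. openin Y U \<Longrightarrow> U = {} \<or> U = Q"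
  proof -
    fix U assume U: "openin Y U"
    show "U = {} \<or> U = Q"
    proof (rule ccontr)
      assume "\<not> (U = {} \<or> U = Q)"
      then obtain O1 O2 where O1: "O1 \<in> U" and O2: "O2 \<in> Q" "O2 \<notin> U"
        using U openY by blast
      obtain x where x: "x \<in> topspace X" "O1 = p x" using Qp O1 U openY by blast
      obtain y where y: "y \<in> topspace X" "O2 = p y" using Qp O2 by blast
      define U' where "U' = {x \<in> topspace X. p x \<in> U}"
      have "openin X U'" using U openY U'_def by simp
      then have cl: "closedin X (topspace X - U')" by auto
      have "p y \<subseteq> topspace X - U'"
        using orb_sub[OF y(1)] orb_eq[OF y(1)] O2 y(2) U'_def by auto
      then have "X closure_of p y \<subseteq> topspace X - U'" using closure_of_minimal cl by blast
      then have "topspace X \<subseteq> topspace X - U'" using dense_orbits[OF y(1)] p_def by simp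
      moreover have "x \<in> U'" using x O1 U'_def by simp
      ultimately show False using x by auto
    qed
  qed
  define E where "E = End_space Y"
  define B where "B = {{f :: 'x set \<Rightarrow> 'x set. f ` K \<subseteq> U} | K U. compactin Y K \<and> openin Y U}"
  have gen: "generate_topology_on B W \<Longrightarrow> W \<inter> E = {} \<or> E \<subseteq> W" for W
  proof (induction rule: generate_topology_on.induct)
    case Empty then show ?case by simp
  next
    case (Int a b) then show ?case by blast
  next
    case (UN K) then show ?case by blast
  next
    case (Basis s)
    then obtain K U where s: "s = {f. f ` K \<subseteq> U}" and K: "compactin Y K" and U: "openin Y U"
      unfolding B_def by blast
    have KQ: "K \<subseteq> Q" using compactin_subset_topspace[OF K] topY by simp
    show ?case
    proof (cases "U = {}")
      case True
      then show ?thesis using s by (cases "K = {}") auto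
    next
      case False
      then have "U = Q" using indisc U by blast
      have "E \<subseteq> s"
      proof
        fix f assume "f \<in> E"
        then have "continuous_map Y Y f" unfolding E_def End_space_def by simp
        then have "f ` Q \<subseteq> Q" using continuous_map_image_subset_topspace topY by metis
        then show "f \<in> s" using s KQ \<open>U = Q\<close> by auto
      qed
      then show ?thesis by blast
    qed
  qed
  have psiE: "psi_map X p Q h \<in> E" if h: "h \<in> End_Delta X Q" for h
  proof -
    have hc: "continuous_map X X h" using h unfolding End_Delta_def by simp
    have maps: "psi_map X p Q h ` Q \<subseteq> Q"
    proof
      fix z assume "z \<in> psi_map X p Q h ` Q"
      then obtain Aa where O: "Aa \<in> Q" "z = psi_map X p Q h Aa" by auto
      then have ex: "\<exists>x. x \<in> topspace X \<and> p x = Aa" using Qp by metis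
      define x where "x = (SOME x. x \<in> topspace X \<and> p x = Aa)"
      have "x \<in> topspace X" using someI_ex[OF ex] x_def by simp
      then have "h x \<in> topspace X" using hc continuous_map_image_subset_topspace by blast
      moreover have "z = p (h x)" using O x_def unfolding psi_map_def by simp
      ultimately show "z \<in> Q" using pQ by simp
    qed
    have "continuous_map Y Y (psi_map X p Q h)"
      unfolding continuous_map_def
    proof (intro conjI allI impI)
      show "psi_map X p Q h \<in> topspace Y \<rightarrow> topspace Y" using maps topY by auto
    next
      fix U assume U: "openin Y U"
      then consider "U = {}" | "U = Q" using indisc by blast
      then show "openin Y {x \<in> topspace Y. psi_map X p Q h x \<in> U}"
      proof cases
        case 1 then show ?thesis by simp
      next
        case 2
        then have "{x \<in> topspace Y. psi_map X p Q h x \<in> U} = topspace Y" using maps topY by auto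
        then show ?thesis by simp
      qed
    qed
    moreover have "psi_map X p Q h \<in> extensional (topspace Y)"
      unfolding extensional_def psi_map_def topY by simp
    ultimately show ?thesis unfolding E_def End_space_def by simp
  qed
  have CONT: "prop_CONT X Q Y p"
    unfolding prop_CONT_def compact_open_topology_def continuous_map_def B_def[symmetric]
  proof (intro conjI allI impI)
    show "psi_map X p (topspace Y) \<in> topspace (subtopology (topology_generated_by
        {{f. f ` K \<subseteq> U} | K U. compactin X K \<and> openin X U}) (End_Delta X Q))
      \<rightarrow> topspace (subtopology (topology_generated_by B) (End_space Y))"
    proof
      fix h assume "h \<in> topspace (subtopology (topology_generated_by
        {{f. f ` K \<subseteq> U} | K U. compactin X K \<and> openin X U}) (End_Delta X Q))"
      then have "h \<in> End_Delta X Q" by simp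
      then have "psi_map X p Q h \<in> E" by (rule psiE)
      moreover have "{f. f ` {} \<subseteq> {}} \<in> B" unfolding B_def by (rule CollectI, rule exI[of _ "{}"], rule exI[of _ "{}"]) simp
      ultimately show "psi_map X p (topspace Y) h \<in> topspace (subtopology (topology_generated_by B) (End_space Y))"
        using topY E_def by auto
    qed
  next
    fix U assume "openin (subtopology (topology_generated_by B) (End_space Y)) U"
    then obtain W where W: "generate_topology_on B W" "U = W \<inter> E"
      unfolding openin_subtopology openin_topology_generated_by_iff E_def by auto
    let ?S = "subtopology (topology_generated_by
        {{f. f ` K \<subseteq> U} | K U. compactin X K \<and> openin X U}) (End_Delta X Q)"
    from gen[OF W(1)] show "openin ?S {x \<in> topspace ?S. psi_map X p (topspace Y) x \<in> U}"
    proof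
      assume "W \<inter> E = {}"
      then show ?thesis using W(2) by simp
    next
      assume "E \<subseteq> W"
      have eq: "{x \<in> topspace ?S. psi_map X p (topspace Y) x \<in> U} = topspace ?S"
        using W(2) psiE topY \<open>E \<subseteq> W\<close> by auto
      show ?thesis by (subst eq) (rule openin_topspace)
    qed
  qed
  obtain x x' where x: "x \<in> topspace X" and x': "x' \<in> topspace X" and xx': "p x \<noteq> p x'"
    using two_orbits unfolding p_def by blast
  define L where "L = Q - {p x}"
  have Lc: "compactin Y L"
    unfolding compactin_def
  proof (intro conjI allI impI)
    show "L \<subseteq> topspace Y" using topY L_def by auto
  next
    fix \<U> assume a: "(\<forall>U\<in>\<U>. openin Y U) \<and> L \<subseteq> \<Union>\<U>"
    show "\<exists>\<F>. finite \<F> \<and> \<F> \<subseteq> \<U> \<and> L \<subseteq> \<Union>\<F>"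
    proof (cases "L = {}")
      case True then show ?thesis by auto
    next
      case False
      then obtain U where U: "U \<in> \<U>" "U \<noteq> {}" using a by blast
      then have "U = Q" using indisc[of U] a by blast
      then show ?thesis using U L_def by (intro exI[of _ "{U}"]) auto
    qed
  qed
  have notCOMP: "\<not> prop_COMP X Y p"
  proof
    assume "prop_COMP X Y p"
    then have "\<exists>K. compactin X K \<and> p ` K = L"
      using Lc unfolding prop_COMP_def by (elim allE[of _ L]) (rule mp)
    then obtain K where K: "compactin X K" and pK: "p ` K = L" by blast
    have KX: "K \<subseteq> topspace X" using compactin_subset_topspace[OF K] .
    define C where "C i = (\<lambda>(g, k). act g k) ` (Gi i \<times> K)" for i
    define D where "D i = (\<lambda>g. act g x) ` Gi i" for i
    have contx: "continuous_map TG X (\<lambda>g. act g x)"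
    proof -
      have "continuous_map TG (prod_topology TG X) (\<lambda>g. (g, x))"
        using x by (simp add: continuous_map_pairwise o_def)
      from continuous_map_compose[OF this cont] show ?thesis by (simp add: o_def)
    qed
    have Cc: "closedin X (C i)" for i
    proof -
      have "compactin (prod_topology TG X) (Gi i \<times> K)"
        by (simp add: compactin_Times Gi_compact K)
      from image_compactin[OF this cont] show ?thesis
        unfolding C_def by (rule compactin_imp_closedin[OF Hausdorff])
    qed
    have Dc: "closedin X (D i)" for i
      unfolding D_def using compactin_imp_closedin[OF Hausdorff image_compactin[OF Gi_compact contx]] .
    define N where "N = range C \<union> range D"
    have "countable N" unfolding N_def by simp
    moreover have "\<Union>N = topspace X"
    proof
      show "\<Union>N \<subseteq> topspace X" unfolding N_def using Cc Dc by (auto dest!: closedin_subset)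
      show "topspace X \<subseteq> \<Union>N"
      proof
        fix z assume z: "z \<in> topspace X"
        show "z \<in> \<Union>N"
        proof (cases "p z = p x")
          case True
          then have "z \<in> p x" using orb_self[OF z] by simp
          then obtain g where g: "g \<in> G" "z = act g x" unfolding p_def orbit_def G_def by auto
          then obtain i where "g \<in> Gi i" using G_union G_def by auto
          then have "z \<in> D i" using g D_def by auto
          then show ?thesis unfolding N_def by auto
        next
          case False
          then have "p z \<in> L" using pQ[OF z] L_def by simp
          then obtain k where k: "k \<in> K" "p z = p k" using pK by force
          then have "z \<in> p k" using orb_self[OF z] by simp
          then obtain g where g: "g \<in> G" "z = act g k" unfolding p_def orbit_def G_def by auto
          then obtain i where "g \<in> Gi i" using G_union G_def by auto
          then have "z \<in> C i" using g k C_def by auto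
          then show ?thesis unfolding N_def by auto
        qed
      qed
    qed
    ultimately have "\<not> (\<forall>M\<in>N. nowhere_dense_in X M)"
    proof (intro notI)
      assume cN: "countable N" and uN: "\<Union>N = topspace X" and nd: "\<forall>M\<in>N. nowhere_dense_in X M"
      have "\<exists>\<N>. countable \<N> \<and> (\<forall>N\<in>\<N>. nowhere_dense_in X N) \<and> \<Union>\<N> = topspace X"
        by (rule exI[of _ N]) (intro conjI cN nd uN)
      then show False using Baire unfolding Baire_space_def by (rule notE[rotated])
    qed
    then obtain M where M: "M \<in> N" "\<not> nowhere_dense_in X M" by blast
    have Mcl: "closedin X M" using M(1) Cc Dc N_def by auto
    then have "X interior_of M \<noteq> {}" using M(2) closedin_subset[OF Mcl]
      unfolding nowhere_dense_in_def by (simp add: closure_of_closedin)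
    then obtain W where W: "openin X W" "W \<noteq> {}" "W \<subseteq> M"
      using interior_of_subset[of X M] openin_interior_of[of X M] by blast
    have meet: "\<And>y. y \<in> topspace X \<Longrightarrow> \<exists>z. z \<in> p y \<and> z \<in> M"
    proof -
      fix y assume y: "y \<in> topspace X"
      have "X closure_of p y = topspace X" using dense_orbits[OF y] unfolding p_def .
      then have "p y \<inter> W \<noteq> {}" using W(1,2) unfolding dense_intersects_open by blast
      then show "\<exists>z. z \<in> p y \<and> z \<in> M" using W by blast
    qed
    from M(1) show False unfolding N_def
    proof
      assume "M \<in> range C"
      then obtain i where Mi: "M = C i" by blast
      obtain z where z: "z \<in> p x" "z \<in> C i" using meet[OF x] Mi by blast
      then obtain g k where gk: "g \<in> Gi i" "k \<in> K" "z = act g k" unfolding C_def by auto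
      have "g \<in> G" using gk G_union G_def by auto
      then have "z \<in> p k" using gk unfolding p_def orbit_def G_def by auto
      then have "p z = p k" using orb_eq KX gk by blast
      moreover have "p z = p x" using orb_eq x z by blast
      moreover have "p k \<in> L" using pK gk by blast
      ultimately show False using L_def by simp
    next
      assume "M \<in> range D"
      then obtain i where Mi: "M = D i" by blast
      obtain z where z: "z \<in> p x'" "z \<in> D i" using meet[OF x'] Mi by blast
      then obtain g where g: "g \<in> Gi i" "z = act g x" unfolding D_def by auto
      have "g \<in> G" using g G_union G_def by auto
      then have "z \<in> p x" using g unfolding p_def orbit_def G_def by auto
      then have "p z = p x" using orb_eq x by blast
      moreover have "p z = p x'" using orb_eq x' z by blast
      ultimately show False using xx' by simp
    qed
  qed
  show ?thesis using CONT notCOMP unfolding p_def Q_def Y_def by simp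
qed

end
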